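(* A $*$-category is a pre-Hilbert $*$-category if and only if (H1) there is a zero object, (H2) every pair of objects has an orthonormal biproduct, (H3) every parallel pair of morphisms has an isometric equaliser, and (H4) every isometry is a normal monomorphism.
   Context: A $*$-category is a category with a choice of $f^*\colon Y\to X$ for each $f\colon X\to Y$ such that $1^*=1$, $(gf)^*=f^*g^*$, $(f^* )^*=f$; $f$ is an isometry if $f^*f=1$. An isometric equaliser is an equaliser that is an isometry; a kernel of $f$ is an equaliser of $f$ and the zero morphism; a normal monomorphism is a kernel of some morphism. An orthonormal biproduct is a biproduct $(X,s_1,r_1,s_2,r_2)$ with $r_k=s_k^*$. A pre-Hilbert $*$-category is a $*$-category in which (R1) there is a zero object, (R2) every pair of objects has an orthonormal biproduct, (R3) every morphism has an isometric kernel, and (R4) every diagonal $\Delta\colon X\to X\oplus X$ is a normal monomorphism. *)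

theory Defs
  imports Main
begin

text \<open>A category is given by a set of objects, a set of arrows, domain and codomain
maps, composition (cmp g f means g after f), identities, and (for a star-category)
a choice of adjoint for every arrow.\<close>

record ('o, 'm) scat =
  Ob  :: "'o set"
  Ar  :: "'m set"
  dom :: "'m \<Rightarrow> 'o"
  cod :: "'m \<Rightarrow> 'o"
  cmp :: "'m \<Rightarrow> 'm \<Rightarrow> 'm"
  idn :: "'o \<Rightarrow> 'm"
  adj :: "'m \<Rightarrow> 'm"

definition hom :: "('o, 'm) scat \<Rightarrow> 'o \<Rightarrow> 'o \<Rightarrow> 'm set" where
  "hom C X Y = {f \<in> Ar C. dom C f = X \<and> cod C f = Y}"

definition category :: "('o, 'm) scat \<Rightarrow> bool" where
  "category C \<longleftrightarrow>
     (\<forall>f \<in> Ar C. dom C f \<in> Ob C \<and> cod C f \<in> Ob C) \<and>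
     (\<forall>X \<in> Ob C. idn C X \<in> hom C X X) \<and>
     (\<forall>X \<in> Ob C. \<forall>Y \<in> Ob C. \<forall>Z \<in> Ob C. \<forall>f \<in> hom C X Y. \<forall>g \<in> hom C Y Z.
        cmp C g f \<in> hom C X Z) \<and>
     (\<forall>W \<in> Ob C. \<forall>X \<in> Ob C. \<forall>Y \<in> Ob C. \<forall>Z \<in> Ob C.
        \<forall>f \<in> hom C W X. \<forall>g \<in> hom C X Y. \<forall>h \<in> hom C Y Z.
        cmp C h (cmp C g f) = cmp C (cmp C h g) f) \<and>
     (\<forall>X \<in> Ob C. \<forall>Y \<in> Ob C. \<forall>f \<in> hom C X Y.
        cmp C (idn C Y) f = f \<and> cmp C f (idn C X) = f)"

definition star_category :: "('o, 'm) scat \<Rightarrow> bool" where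
  "star_category C \<longleftrightarrow> category C \<and>
     (\<forall>X \<in> Ob C. \<forall>Y \<in> Ob C. \<forall>f \<in> hom C X Y. adj C f \<in> hom C Y X) \<and>
     (\<forall>X \<in> Ob C. adj C (idn C X) = idn C X) \<and>
     (\<forall>X \<in> Ob C. \<forall>Y \<in> Ob C. \<forall>Z \<in> Ob C. \<forall>f \<in> hom C X Y. \<forall>g \<in> hom C Y Z.
        adj C (cmp C g f) = cmp C (adj C f) (adj C g)) \<and>
     (\<forall>f \<in> Ar C. adj C (adj C f) = f)"

definition isometry :: "('o, 'm) scat \<Rightarrow> 'm \<Rightarrow> bool" where
  "isometry C f \<longleftrightarrow> f \<in> Ar C \<and> cmp C (adj C f) f = idn C (dom C f)"

definition zero_object :: "('o, 'm) scat \<Rightarrow> 'o \<Rightarrow> bool" where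
  "zero_object C Z \<longleftrightarrow> Z \<in> Ob C \<and>
     (\<forall>X \<in> Ob C. (\<exists>!f. f \<in> hom C X Z) \<and> (\<exists>!f. f \<in> hom C Z X))"

definition zero_mor :: "('o, 'm) scat \<Rightarrow> 'o \<Rightarrow> 'o \<Rightarrow> 'm \<Rightarrow> bool" where
  "zero_mor C X Y z \<longleftrightarrow> z \<in> hom C X Y \<and>
     (\<exists>Z a b. zero_object C Z \<and> a \<in> hom C X Z \<and> b \<in> hom C Z Y \<and> z = cmp C b a)"

definition equaliser :: "('o, 'm) scat \<Rightarrow> 'm \<Rightarrow> 'm \<Rightarrow> 'm \<Rightarrow> bool" where
  "equaliser C e f g \<longleftrightarrow>
     f \<in> Ar C \<and> g \<in> Ar C \<and> dom C f = dom C g \<and> cod C f = cod C g \<and>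
     e \<in> hom C (dom C e) (dom C f) \<and> dom C e \<in> Ob C \<and>
     cmp C f e = cmp C g e \<and>
     (\<forall>W \<in> Ob C. \<forall>h \<in> hom C W (dom C f). cmp C f h = cmp C g h \<longrightarrow>
        (\<exists>!u. u \<in> hom C W (dom C e) \<and> cmp C e u = h))"

definition kernel :: "('o, 'm) scat \<Rightarrow> 'm \<Rightarrow> 'm \<Rightarrow> bool" where
  "kernel C e f \<longleftrightarrow> (\<exists>z. zero_mor C (dom C f) (cod C f) z \<and> equaliser C e f z)"

definition normal_mono :: "('o, 'm) scat \<Rightarrow> 'm \<Rightarrow> bool" where
  "normal_mono C m \<longleftrightarrow> (\<exists>f. kernel C m f)"

definition biproduct :: "('o, 'm) scat \<Rightarrow> 'o \<Rightarrow> 'o \<Rightarrow> 'o \<Rightarrow> 'm \<Rightarrow> 'm \<Rightarrow> 'm \<Rightarrow> 'm \<Rightarrow> bool" where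
  "biproduct C A B P s1 r1 s2 r2 \<longleftrightarrow>
     A \<in> Ob C \<and> B \<in> Ob C \<and> P \<in> Ob C \<and>
     s1 \<in> hom C A P \<and> r1 \<in> hom C P A \<and> s2 \<in> hom C B P \<and> r2 \<in> hom C P B \<and>
     cmp C r1 s1 = idn C A \<and> cmp C r2 s2 = idn C B \<and>
     zero_mor C A B (cmp C r2 s1) \<and> zero_mor C B A (cmp C r1 s2) \<and>
     (\<forall>W \<in> Ob C. \<forall>f1 \<in> hom C W A. \<forall>f2 \<in> hom C W B.
        \<exists>!u. u \<in> hom C W P \<and> cmp C r1 u = f1 \<and> cmp C r2 u = f2) \<and>
     (\<forall>W \<in> Ob C. \<forall>g1 \<in> hom C A W. \<forall>g2 \<in> hom C B W.
        \<exists>!v. v \<in> hom C P W \<and> cmp C v s1 = g1 \<and> cmp C v s2 = g2)"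

definition orthonormal_biproduct ::
  "('o, 'm) scat \<Rightarrow> 'o \<Rightarrow> 'o \<Rightarrow> 'o \<Rightarrow> 'm \<Rightarrow> 'm \<Rightarrow> 'm \<Rightarrow> 'm \<Rightarrow> bool" where
  "orthonormal_biproduct C A B P s1 r1 s2 r2 \<longleftrightarrow>
     biproduct C A B P s1 r1 s2 r2 \<and> r1 = adj C s1 \<and> r2 = adj C s2"

definition has_zero_object :: "('o, 'm) scat \<Rightarrow> bool" where
  "has_zero_object C \<longleftrightarrow> (\<exists>Z. zero_object C Z)"

definition has_orthonormal_biproducts :: "('o, 'm) scat \<Rightarrow> bool" where
  "has_orthonormal_biproducts C \<longleftrightarrow>
     (\<forall>A \<in> Ob C. \<forall>B \<in> Ob C. \<exists>P s1 r1 s2 r2. orthonormal_biproduct C A B P s1 r1 s2 r2)"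

definition has_isometric_kernels :: "('o, 'm) scat \<Rightarrow> bool" where
  "has_isometric_kernels C \<longleftrightarrow> (\<forall>f \<in> Ar C. \<exists>e. kernel C e f \<and> isometry C e)"

definition diagonals_normal :: "('o, 'm) scat \<Rightarrow> bool" where
  "diagonals_normal C \<longleftrightarrow>
     (\<forall>X P s1 r1 s2 r2 d. orthonormal_biproduct C X X P s1 r1 s2 r2 \<longrightarrow>
        d \<in> hom C X P \<longrightarrow> cmp C r1 d = idn C X \<longrightarrow> cmp C r2 d = idn C X \<longrightarrow>
        normal_mono C d)"

definition pre_hilbert :: "('o, 'm) scat \<Rightarrow> bool" where
  "pre_hilbert C \<longleftrightarrow> star_category C \<and> has_zero_object C \<and>
     has_orthonormal_biproducts C \<and> has_isometric_kernels C \<and> diagonals_normal C"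

definition has_isometric_equalisers :: "('o, 'm) scat \<Rightarrow> bool" where
  "has_isometric_equalisers C \<longleftrightarrow>
     (\<forall>X \<in> Ob C. \<forall>Y \<in> Ob C. \<forall>f \<in> hom C X Y. \<forall>g \<in> hom C X Y.
        \<exists>e. equaliser C e f g \<and> isometry C e)"

definition isometries_normal :: "('o, 'm) scat \<Rightarrow> bool" where
  "isometries_normal C \<longleftrightarrow> (\<forall>f. isometry C f \<longrightarrow> normal_mono C f)"

end

theory Submission
  imports Defs
begin

lemma cat_D:
  assumes "category C"
  shows cD1: "\<forall>f \<in> Ar C. dom C f \<in> Ob C \<and> cod C f \<in> Ob C"
    and cD2: "\<forall>X \<in> Ob C. idn C X \<in> hom C X X"
    and cD3: "\<forall>X \<in> Ob C. \<forall>Y \<in> Ob C. \<forall>Z \<in> Ob C. \<forall>f \<in> hom C X Y. \<forall>g \<in> hom C Y Z.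
        cmp C g f \<in> hom C X Z"
    and cD4: "\<forall>W \<in> Ob C. \<forall>X \<in> Ob C. \<forall>Y \<in> Ob C. \<forall>Z \<in> Ob C.
        \<forall>f \<in> hom C W X. \<forall>g \<in> hom C X Y. \<forall>h \<in> hom C Y Z.
        cmp C h (cmp C g f) = cmp C (cmp C h g) f"
    and cD5: "\<forall>X \<in> Ob C. \<forall>Y \<in> Ob C. \<forall>f \<in> hom C X Y.
        cmp C (idn C Y) f = f \<and> cmp C f (idn C X) = f"
  using assms[unfolded category_def] by blast+

lemma cat_ob: "category C \<Longrightarrow> f \<in> hom C X Y \<Longrightarrow> X \<in> Ob C \<and> Y \<in> Ob C"
  unfolding hom_def using cD1 by blast

lemma cat_comp: "category C \<Longrightarrow> f \<in> hom C X Y \<Longrightarrow> g \<in> hom C Y Z \<Longrightarrow> cmp C g f \<in> hom C X Z"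
proof -
  assume c: "category C" and f: "f \<in> hom C X Y" and g: "g \<in> hom C Y Z"
  then have "X \<in> Ob C" "Y \<in> Ob C" "Z \<in> Ob C" using cat_ob by metis+
  then show ?thesis using cD3[OF c] f g by blast
qed

lemma cat_assoc: "category C \<Longrightarrow> f \<in> hom C W X \<Longrightarrow> g \<in> hom C X Y \<Longrightarrow> h \<in> hom C Y Z \<Longrightarrow>
   cmp C h (cmp C g f) = cmp C (cmp C h g) f"
proof -
  assume c: "category C" and f: "f \<in> hom C W X" and g: "g \<in> hom C X Y" and h: "h \<in> hom C Y Z"
  then have "W \<in> Ob C" "X \<in> Ob C" "Y \<in> Ob C" "Z \<in> Ob C" using cat_ob by metis+
  then show ?thesis using cD4[OF c] f g h by blast
qed

lemma cat_idl: "category C \<Longrightarrow> f \<in> hom C X Y \<Longrightarrow> cmp C (idn C Y) f = f"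
  using cat_ob[of C f X Y] cD5[of C] by blast

lemma cat_idr: "category C \<Longrightarrow> f \<in> hom C X Y \<Longrightarrow> cmp C f (idn C X) = f"
  using cat_ob[of C f X Y] cD5[of C] by blast

lemma cat_id: "category C \<Longrightarrow> X \<in> Ob C \<Longrightarrow> idn C X \<in> hom C X X"
  using cD2 by blast

lemma homI: "f \<in> Ar C \<Longrightarrow> f \<in> hom C (dom C f) (cod C f)"
  unfolding hom_def by auto

lemma homD: "f \<in> hom C X Y \<Longrightarrow> f \<in> Ar C \<and> dom C f = X \<and> cod C f = Y"
  unfolding hom_def by auto

lemma zoD:
  assumes "zero_object C Z" "X \<in> Ob C"
  shows zo_in: "\<exists>!f. f \<in> hom C X Z" and zo_out: "\<exists>!f. f \<in> hom C Z X" and zo_ob: "Z \<in> Ob C"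
proof -
  have H: "\<forall>X \<in> Ob C. (\<exists>!f. f \<in> hom C X Z) \<and> (\<exists>!f. f \<in> hom C Z X)" 
    using assms(1) unfolding zero_object_def by (rule conjunct2)
  show "Z \<in> Ob C" using assms(1) unfolding zero_object_def by (rule conjunct1)
  show "\<exists>!f. f \<in> hom C X Z" "\<exists>!f. f \<in> hom C Z X" using bspec[OF H assms(2)] by (rule conjunct1, rule conjunct2)
qed

lemma zero_unique:
  assumes c: "category C" and z1: "zero_mor C X Y z1" and z2: "zero_mor C X Y z2"
  shows "z1 = z2"
proof -
  obtain Z a b where Z: "zero_object C Z" and a: "a \<in> hom C X Z" and b: "b \<in> hom C Z Y"
    and e1: "z1 = cmp C b a" using z1 unfolding zero_mor_def by blast
  obtain Z' a' b' where Z': "zero_object C Z'" and a': "a' \<in> hom C X Z'" and b': "b' \<in> hom C Z' Y"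
    and e2: "z2 = cmp C b' a'" using z2 unfolding zero_mor_def by blast
  have ZO: "Z \<in> Ob C" "X \<in> Ob C" "Y \<in> Ob C" using a b cat_ob[OF c] by blast+
  obtain i where i: "i \<in> hom C Z Z'" using zo_in[OF Z' ZO(1)] by blast
  have ia: "cmp C i a \<in> hom C X Z'" using cat_comp[OF c a i] .
  have "cmp C i a = a'" using zo_in[OF Z' ZO(2)] ia a' by blast
  moreover have bi: "cmp C b' i \<in> hom C Z Y" using cat_comp[OF c i b'] .
  have "cmp C b' i = b" using zo_out[OF Z ZO(3)] bi b by blast
  ultimately show ?thesis using e1 e2 cat_assoc[OF c a i b'] by simp
qed

lemma zero_comp_right:
  assumes c: "category C" and z: "zero_mor C X Y z" and h: "h \<in> hom C W X"
  shows "zero_mor C W Y (cmp C z h)"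
proof -
  obtain Z a b where Z: "zero_object C Z" and a: "a \<in> hom C X Z" and b: "b \<in> hom C Z Y"
    and e1: "z = cmp C b a" using z unfolding zero_mor_def by blast
  have "cmp C z h = cmp C b (cmp C a h)" using e1 cat_assoc[OF c h a b] by simp
  moreover have "cmp C a h \<in> hom C W Z" using cat_comp[OF c h a] .
  moreover have "cmp C z h \<in> hom C W Y" using z h cat_comp[OF c] unfolding zero_mor_def by blast
  ultimately show ?thesis unfolding zero_mor_def using Z b by blast
qed

lemma zero_exists:
  assumes "has_zero_object C" "X \<in> Ob C" "Y \<in> Ob C" "category C"
  shows "\<exists>z. zero_mor C X Y z"
proof -
  obtain Z where Z: "zero_object C Z" using assms unfolding has_zero_object_def by blast
  obtain a where a: "a \<in> hom C X Z" using zo_in[OF Z assms(2)] by blast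
  obtain b where b: "b \<in> hom C Z Y" using zo_out[OF Z assms(3)] by blast
  have "cmp C b a \<in> hom C X Y" using cat_comp[OF assms(4) a b] .
  then show ?thesis unfolding zero_mor_def using Z a b by blast
qed

lemma eqD:
  assumes "equaliser C e a b"
  shows "a \<in> Ar C" "b \<in> Ar C" "dom C a = dom C b" "cod C a = cod C b"
    "e \<in> hom C (dom C e) (dom C a)" "dom C e \<in> Ob C" "cmp C a e = cmp C b e"
    and eqU0: "\<forall>W \<in> Ob C. \<forall>h \<in> hom C W (dom C a). cmp C a h = cmp C b h \<longrightarrow>
        (\<exists>!u. u \<in> hom C W (dom C e) \<and> cmp C e u = h)"
  apply (insert assms[unfolded equaliser_def])
  apply (elim conjE, assumption)+
  done

lemma eqU:
  assumes "equaliser C e a b" "W \<in> Ob C" "h \<in> hom C W (dom C a)" "cmp C a h = cmp C b h"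
  shows "\<exists>!u. u \<in> hom C W (dom C e) \<and> cmp C e u = h"
  using eqU0[OF assms(1), rule_format, OF assms(2-4)] .

lemma eqI:
  assumes "a \<in> Ar C" "b \<in> Ar C" "dom C a = dom C b" "cod C a = cod C b"
    "e \<in> hom C (dom C e) (dom C a)" "dom C e \<in> Ob C" "cmp C a e = cmp C b e"
    "\<forall>W \<in> Ob C. \<forall>h \<in> hom C W (dom C a). cmp C a h = cmp C b h \<longrightarrow>
        (\<exists>!u. u \<in> hom C W (dom C e) \<and> cmp C e u = h)"
  shows "equaliser C e a b"
  unfolding equaliser_def by (intro conjI; rule assms)

lemma ex1_uniq: "\<exists>!x. P x \<Longrightarrow> P a \<Longrightarrow> P b \<Longrightarrow> a = b"
  by blast

lemma ex1_ex: "\<exists>!x. P x \<Longrightarrow> \<exists>x. P x"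
  by blast

lemma eq_mono:
  assumes c: "category C" and e: "equaliser C e a b"
    and u1: "u1 \<in> hom C W (dom C e)" and u2: "u2 \<in> hom C W (dom C e)"
    and eq: "cmp C e u1 = cmp C e u2"
  shows "u1 = u2"
proof -
  have eh: "e \<in> hom C (dom C e) (dom C a)" using eqD(5)[OF e] .
  have a: "a \<in> hom C (dom C a) (cod C a)" using eqD(1)[OF e] by (rule homI)
  have b: "b \<in> hom C (dom C a) (cod C a)" using homI[of b C] eqD(2,3,4)[OF e] by simp
  have W: "W \<in> Ob C" using cat_ob[OF c u1] by blast
  have h: "cmp C e u1 \<in> hom C W (dom C a)" using cat_comp[OF c u1 eh] .
  have "cmp C a (cmp C e u1) = cmp C b (cmp C e u1)"
    using cat_assoc[OF c u1 eh a] cat_assoc[OF c u1 eh b] eqD(7)[OF e] by simp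
  from ex1_uniq[OF eqU[OF e W h this]] show ?thesis using u1 u2 eq by simp
qed

lemma eq_transfer:
  assumes c: "category C" and e: "equaliser C e a b" and e': "equaliser C e' a b"
    and ecd: "equaliser C e cc d"
  shows "equaliser C e' cc d"
proof -
  have eh: "e \<in> hom C (dom C e) (dom C a)" using eqD(5)[OF e] .
  have eh': "e' \<in> hom C (dom C e') (dom C a)" using eqD(5)[OF e'] .
  have ehc: "e \<in> hom C (dom C e) (dom C cc)" using eqD(5)[OF ecd] .
  have T: "dom C cc = dom C a" using eh ehc homD by metis
  have cc: "cc \<in> hom C (dom C a) (cod C cc)" using homI[of cc C] eqD(1)[OF ecd] T by simp
  have d: "d \<in> hom C (dom C a) (cod C cc)" using homI[of d C] eqD(2,3,4)[OF ecd] T by simp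
  have E': "dom C e' \<in> Ob C" using eqD(6)[OF e'] .
  obtain v where v: "v \<in> hom C (dom C e') (dom C e)" and ev: "cmp C e v = e'"
    using ex1_ex[OF eqU[OF e E' eh' eqD(7)[OF e']]] by blast
  have ce: "cmp C cc e' = cmp C d e'"
    using ev cat_assoc[OF c v eh cc] cat_assoc[OF c v eh d] eqD(7)[OF ecd] T by simp
  have E: "dom C e \<in> Ob C" using eqD(6)[OF e] .
  obtain w where w: "w \<in> hom C (dom C e) (dom C e')" and ew: "cmp C e' w = e"
    using ex1_ex[OF eqU[OF e' E eh eqD(7)[OF e]]] by blast
  have univ: "\<exists>!u. u \<in> hom C W (dom C e') \<and> cmp C e' u = h"
    if W: "W \<in> Ob C" and h: "h \<in> hom C W (dom C cc)" and hh: "cmp C cc h = cmp C d h" for W h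
  proof -
    obtain u0 where u0: "u0 \<in> hom C W (dom C e)" and eu0: "cmp C e u0 = h"
      using ex1_ex[OF eqU[OF ecd W h hh]] by blast
    have wu: "cmp C w u0 \<in> hom C W (dom C e')" using cat_comp[OF c u0 w] .
    have "cmp C e' (cmp C w u0) = h" using cat_assoc[OF c u0 w eh'] ew eu0 by simp
    moreover have "u1 = u2" if "u1 \<in> hom C W (dom C e')" "u2 \<in> hom C W (dom C e')"
      "cmp C e' u1 = h" "cmp C e' u2 = h" for u1 u2
      using eq_mono[OF c e' that(1,2)] that(3,4) by simp
    ultimately show ?thesis using wu by (intro ex1I[of _ "cmp C w u0"]) auto
  qed
  have eh'c: "e' \<in> hom C (dom C e') (dom C cc)" using eh' T by simp
  show ?thesis
  proof (rule eqI[OF eqD(1-4)[OF ecd] eh'c E' ce], intro ballI impI)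
    fix W h assume "W \<in> Ob C" "h \<in> hom C W (dom C cc)" "cmp C cc h = cmp C d h"
    then show "\<exists>!u. u \<in> hom C W (dom C e') \<and> cmp C e' u = h" by (rule univ)
  qed
qed

lemma kernel_transfer:
  assumes c: "category C" and e: "equaliser C e a b" and e': "equaliser C e' a b"
    and k: "kernel C e f"
  shows "kernel C e' f"
proof -
  obtain z where z: "zero_mor C (dom C f) (cod C f) z" and ez: "equaliser C e f z"
    using k unfolding kernel_def by blast
  have "equaliser C e' f z" by (rule eq_transfer[OF c e e' ez])
  then show ?thesis unfolding kernel_def using z by blast
qed

lemma bpD:
  assumes "biproduct C A B P s1 r1 s2 r2"
  shows "A \<in> Ob C" "B \<in> Ob C" "P \<in> Ob C"
    "s1 \<in> hom C A P" "r1 \<in> hom C P A" "s2 \<in> hom C B P" "r2 \<in> hom C P B"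
    "cmp C r1 s1 = idn C A" "cmp C r2 s2 = idn C B"
    "zero_mor C A B (cmp C r2 s1)" "zero_mor C B A (cmp C r1 s2)"
    and prodU0: "\<forall>W \<in> Ob C. \<forall>f1 \<in> hom C W A. \<forall>f2 \<in> hom C W B.
        \<exists>!u. u \<in> hom C W P \<and> cmp C r1 u = f1 \<and> cmp C r2 u = f2"
  apply (insert assms[unfolded biproduct_def])
  apply (elim conjE, assumption)+
  done

lemma prod_ex:
  assumes "biproduct C A B P s1 r1 s2 r2" "W \<in> Ob C" "f1 \<in> hom C W A" "f2 \<in> hom C W B"
  shows "\<exists>u. u \<in> hom C W P \<and> cmp C r1 u = f1 \<and> cmp C r2 u = f2"
proof -
  have "\<exists>!u. u \<in> hom C W P \<and> cmp C r1 u = f1 \<and> cmp C r2 u = f2"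
    using prodU0[OF assms(1), rule_format, OF assms(2-4)] .
  then show ?thesis by (rule ex1_ex)
qed

lemma prod_uniq:
  assumes c: "category C" and bp: "biproduct C A B P s1 r1 s2 r2"
    and u: "u \<in> hom C W P" and u': "u' \<in> hom C W P"
    and e1: "cmp C r1 u = cmp C r1 u'" and e2: "cmp C r2 u = cmp C r2 u'"
  shows "u = u'"
proof -
  have W: "W \<in> Ob C" using cat_ob[OF c u] by blast
  have f1: "cmp C r1 u \<in> hom C W A" using cat_comp[OF c u bpD(5)[OF bp]] .
  have f2: "cmp C r2 u \<in> hom C W B" using cat_comp[OF c u bpD(7)[OF bp]] .
  have ex: "\<exists>!v. v \<in> hom C W P \<and> cmp C r1 v = cmp C r1 u \<and> cmp C r2 v = cmp C r2 u"
    using prodU0[OF bp, rule_format, OF W f1 f2] .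
  have P1: "u \<in> hom C W P \<and> cmp C r1 u = cmp C r1 u \<and> cmp C r2 u = cmp C r2 u" using u by simp
  have P2: "u' \<in> hom C W P \<and> cmp C r1 u' = cmp C r1 u \<and> cmp C r2 u' = cmp C r2 u" using u' e1 e2 by simp
  show ?thesis by (rule ex1_uniq[OF ex P1 P2])
qed

lemma diag_equaliser:
  assumes c: "category C" and bp: "biproduct C X X P s1 r1 s2 r2"
    and d: "d \<in> hom C X P" and d1: "cmp C r1 d = idn C X" and d2: "cmp C r2 d = idn C X"
  shows "equaliser C d r1 r2"
proof -
  have r1: "r1 \<in> hom C P X" and r2: "r2 \<in> hom C P X" using bpD(5,7)[OF bp] by simp_all
  have X: "X \<in> Ob C" using bpD(1)[OF bp] .
  have dd: "dom C d = X" "dom C r1 = P" using d r1 homD by metis+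
  show ?thesis
  proof (rule eqI)
    show "r1 \<in> Ar C" "r2 \<in> Ar C" "dom C r1 = dom C r2" "cod C r1 = cod C r2"
      using r1 r2 homD by metis+
    show "d \<in> hom C (dom C d) (dom C r1)" using d dd by simp
    show "dom C d \<in> Ob C" using X dd by simp
    show "cmp C r1 d = cmp C r2 d" using d1 d2 by simp
    show "\<forall>W\<in>Ob C. \<forall>h\<in>hom C W (dom C r1). cmp C r1 h = cmp C r2 h \<longrightarrow>
        (\<exists>!u. u \<in> hom C W (dom C d) \<and> cmp C d u = h)"
    proof (intro ballI impI)
      fix W h assume W: "W \<in> Ob C" and h0: "h \<in> hom C W (dom C r1)" and hh: "cmp C r1 h = cmp C r2 h"
      have h: "h \<in> hom C W P" using h0 dd by simp
      have uh: "cmp C r1 h \<in> hom C W X" using cat_comp[OF c h r1] .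
      have du: "cmp C d (cmp C r1 h) \<in> hom C W P" using cat_comp[OF c uh d] .
      have a1: "cmp C r1 (cmp C d (cmp C r1 h)) = cmp C r1 h"
        using cat_assoc[OF c uh d r1] d1 cat_idl[OF c uh] by simp
      have a2: "cmp C r2 (cmp C d (cmp C r1 h)) = cmp C r2 h"
        using cat_assoc[OF c uh d r2] d2 cat_idl[OF c uh] hh by simp
      have ex: "cmp C d (cmp C r1 h) = h" using prod_uniq[OF c bp du h a1 a2] .
      have un: "u = cmp C r1 h" if "u \<in> hom C W X" "cmp C d u = h" for u
        using cat_assoc[OF c that(1) d r1] d1 cat_idl[OF c that(1)] that(2) by simp
      show "\<exists>!u. u \<in> hom C W (dom C d) \<and> cmp C d u = h"
      proof (rule ex1I[of _ "cmp C r1 h"])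
        show "cmp C r1 h \<in> hom C W (dom C d) \<and> cmp C d (cmp C r1 h) = h" using dd uh ex by simp
        fix u assume "u \<in> hom C W (dom C d) \<and> cmp C d u = h"
        then have "u \<in> hom C W X" "cmp C d u = h" using dd by simp_all
        then show "u = cmp C r1 h" by (rule un)
      qed
    qed
  qed
qed

lemma lemB:
  assumes c: "category C" and bpa: "has_orthonormal_biproducts C"
    and ik: "has_isometric_kernels C" and dn: "diagonals_normal C"
    and f: "f \<in> hom C X Y" and g: "g \<in> hom C X Y"
  shows "\<exists>e k. kernel C e k \<and> isometry C e \<and> equaliser C e f g"
proof -
  have X: "X \<in> Ob C" and Y: "Y \<in> Ob C" using cat_ob[OF c f] by blast+
  obtain P s1 r1 s2 r2 where ob: "orthonormal_biproduct C Y Y P s1 r1 s2 r2"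
    using bpa Y unfolding has_orthonormal_biproducts_def by blast
  have bp: "biproduct C Y Y P s1 r1 s2 r2" using ob unfolding orthonormal_biproduct_def by blast
  have r1: "r1 \<in> hom C P Y" and r2: "r2 \<in> hom C P Y" using bpD(5,7)[OF bp] by simp_all
  obtain dl where dl: "dl \<in> hom C Y P" and d1: "cmp C r1 dl = idn C Y" and d2: "cmp C r2 dl = idn C Y"
    using prod_ex[OF bp Y cat_id[OF c Y] cat_id[OF c Y]] by blast
  obtain p where p: "p \<in> hom C X P" and p1: "cmp C r1 p = f" and p2: "cmp C r2 p = g"
    using prod_ex[OF bp X f g] by blast
  have "normal_mono C dl"
    using dn[unfolded diagonals_normal_def, rule_format, OF ob dl d1 d2] .
  then obtain q where "kernel C dl q" unfolding normal_mono_def by blast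
  then obtain z where zq: "zero_mor C (dom C q) (cod C q) z" and eqd: "equaliser C dl q z"
    unfolding kernel_def by blast
  have dq: "dom C q = P" using eqD(5)[OF eqd] dl homD by metis
  define Q where "Q = cod C q"
  have qh: "q \<in> hom C P Q" using homI[OF eqD(1)[OF eqd]] dq Q_def by simp
  have zq': "zero_mor C P Q z" using zq dq Q_def by simp
  have kh: "cmp C q p \<in> hom C X Q" using cat_comp[OF c p qh] .
  have "cmp C q p \<in> Ar C" using kh homD by metis
  then obtain e where ke: "kernel C e (cmp C q p)" and ie: "isometry C e"
    using ik unfolding has_isometric_kernels_def by blast
  then obtain z' where z'0: "zero_mor C (dom C (cmp C q p)) (cod C (cmp C q p)) z'"
    and eqe: "equaliser C e (cmp C q p) z'" unfolding kernel_def by blast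
  have dk: "dom C (cmp C q p) = X" "cod C (cmp C q p) = Q" using kh homD by metis+
  have z': "zero_mor C X Q z'" using z'0 dk by simp
  define E where "E = dom C e"
  have eh: "e \<in> hom C E X" using eqD(5)[OF eqe] dk E_def by simp
  have E: "E \<in> Ob C" using eqD(6)[OF eqe] E_def by simp
  have fd: "dom C f = X" using f homD by metis
  have "equaliser C e f g"
  proof (rule eqI)
    show "f \<in> Ar C" "g \<in> Ar C" "dom C f = dom C g" "cod C f = cod C g"
      using f g homD by metis+
    show "e \<in> hom C (dom C e) (dom C f)" using eh fd E_def by simp
    show "dom C e \<in> Ob C" using E E_def by simp
    have pe: "cmp C p e \<in> hom C E P" using cat_comp[OF c eh p] .
    have "cmp C q (cmp C p e) = cmp C z' e"
      using cat_assoc[OF c eh p qh] eqD(7)[OF eqe] by simp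
    moreover have "zero_mor C E Q (cmp C z' e)" using zero_comp_right[OF c z' eh] .
    moreover have "zero_mor C E Q (cmp C z (cmp C p e))" using zero_comp_right[OF c zq' pe] .
    ultimately have "cmp C q (cmp C p e) = cmp C z (cmp C p e)" using zero_unique[OF c] by metis
    moreover have "cmp C p e \<in> hom C E (dom C q)" using pe dq by simp
    ultimately obtain u where u: "u \<in> hom C E (dom C dl)" and du: "cmp C dl u = cmp C p e"
      using ex1_ex[OF eqU[OF eqd E]] by blast
    have u': "u \<in> hom C E Y" using u dl homD by metis
    have "cmp C f e = u"
      using p1 cat_assoc[OF c eh p r1] du cat_assoc[OF c u' dl r1] d1 cat_idl[OF c u'] by simp
    moreover have "cmp C g e = u"
      using p2 cat_assoc[OF c eh p r2] du cat_assoc[OF c u' dl r2] d2 cat_idl[OF c u'] by simp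
    ultimately show "cmp C f e = cmp C g e" by simp
    show "\<forall>W\<in>Ob C. \<forall>h\<in>hom C W (dom C f). cmp C f h = cmp C g h \<longrightarrow>
        (\<exists>!u. u \<in> hom C W (dom C e) \<and> cmp C e u = h)"
    proof (intro ballI impI)
      fix W h assume W: "W \<in> Ob C" and h0: "h \<in> hom C W (dom C f)" and hh: "cmp C f h = cmp C g h"
      have h: "h \<in> hom C W X" using h0 fd by simp
      have ph: "cmp C p h \<in> hom C W P" using cat_comp[OF c h p] .
      have fh: "cmp C f h \<in> hom C W Y" using cat_comp[OF c h f] .
      have dfh: "cmp C dl (cmp C f h) \<in> hom C W P" using cat_comp[OF c fh dl] .
      have a1: "cmp C r1 (cmp C p h) = cmp C r1 (cmp C dl (cmp C f h))"
        using cat_assoc[OF c h p r1] p1 cat_assoc[OF c fh dl r1] d1 cat_idl[OF c fh] by simp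
      have a2: "cmp C r2 (cmp C p h) = cmp C r2 (cmp C dl (cmp C f h))"
        using cat_assoc[OF c h p r2] p2 cat_assoc[OF c fh dl r2] d2 cat_idl[OF c fh] hh by simp
      have phd: "cmp C p h = cmp C dl (cmp C f h)" using prod_uniq[OF c bp ph dfh a1 a2] .
      have dlh: "dl \<in> hom C Y (dom C q)" using dl dq by simp
      have "cmp C (cmp C q p) h = cmp C z (cmp C dl (cmp C f h))"
        using cat_assoc[OF c h p qh] phd cat_assoc[OF c fh dl qh] eqD(7)[OF eqd]
          cat_assoc[OF c fh dl, of z Q] zq' by (simp add: zero_mor_def)
      moreover have "zero_mor C W Q (cmp C z (cmp C dl (cmp C f h)))"
        using zero_comp_right[OF c zq' dfh] .
      moreover have "zero_mor C W Q (cmp C z' h)" using zero_comp_right[OF c z' h] .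
      ultimately have kz: "cmp C (cmp C q p) h = cmp C z' h" using zero_unique[OF c] by metis
      have "h \<in> hom C W (dom C (cmp C q p))" using h dk by simp
      then show "\<exists>!u. u \<in> hom C W (dom C e) \<and> cmp C e u = h" using eqU[OF eqe W _ kz] by simp
    qed
  qed
  then show ?thesis using ke ie by blast
qed

lemma sD1: "star_category C \<Longrightarrow> category C"
  unfolding star_category_def by (rule conjunct1)

lemma sD2: "star_category C \<Longrightarrow> \<forall>X \<in> Ob C. \<forall>Y \<in> Ob C. \<forall>f \<in> hom C X Y. adj C f \<in> hom C Y X"
  unfolding star_category_def by (drule conjunct2, rule conjunct1)

lemma isometry_normal:
  assumes c: "category C" and st: "star_category C" and bpa: "has_orthonormal_biproducts C"
    and ik: "has_isometric_kernels C" and dn: "diagonals_normal C"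
    and m: "isometry C m"
  shows "normal_mono C m"
proof -
  define A where "A = dom C m"
  define B where "B = cod C m"
  have mA: "m \<in> Ar C" and mm: "cmp C (adj C m) m = idn C A" using m A_def unfolding isometry_def by simp_all
  have mh: "m \<in> hom C A B" using homI[OF mA] A_def B_def by simp
  have A: "A \<in> Ob C" and B: "B \<in> Ob C" using cat_ob[OF c mh] by simp_all
  have ms: "adj C m \<in> hom C B A" using sD2[OF st, rule_format, OF A B mh] .
  define pp where "pp = cmp C m (adj C m)"
  have pph: "pp \<in> hom C B B" using cat_comp[OF c ms mh] pp_def by simp
  have ib: "idn C B \<in> hom C B B" using cat_id[OF c B] .
  have dm: "dom C m = A" using A_def by simp
  have dib: "dom C (idn C B) = B" using ib homD by metis
  have eqm: "equaliser C m (idn C B) pp"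
  proof (rule eqI)
    show "idn C B \<in> Ar C" "pp \<in> Ar C" "dom C (idn C B) = dom C pp" "cod C (idn C B) = cod C pp"
      using ib pph homD by metis+
    show "m \<in> hom C (dom C m) (dom C (idn C B))" using mh dm dib by simp
    show "dom C m \<in> Ob C" using A dm by simp
    show "cmp C (idn C B) m = cmp C pp m"
      using cat_idl[OF c mh] pp_def cat_assoc[OF c mh ms mh] mm cat_idr[OF c mh] by simp
    show "\<forall>W\<in>Ob C. \<forall>h\<in>hom C W (dom C (idn C B)). cmp C (idn C B) h = cmp C pp h \<longrightarrow>
        (\<exists>!u. u \<in> hom C W (dom C m) \<and> cmp C m u = h)"
    proof (intro ballI impI)
      fix W h assume W: "W \<in> Ob C" and h0: "h \<in> hom C W (dom C (idn C B))"
        and hh: "cmp C (idn C B) h = cmp C pp h"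
      have h: "h \<in> hom C W B" using h0 dib by simp
      have uh: "cmp C (adj C m) h \<in> hom C W A" using cat_comp[OF c h ms] .
      have ex: "cmp C m (cmp C (adj C m) h) = h"
        using cat_assoc[OF c h ms mh] pp_def hh cat_idl[OF c h] by simp
      have un: "u = cmp C (adj C m) h" if "u \<in> hom C W A" "cmp C m u = h" for u
        using cat_assoc[OF c that(1) mh ms] mm cat_idl[OF c that(1)] that(2) by simp
      show "\<exists>!u. u \<in> hom C W (dom C m) \<and> cmp C m u = h"
      proof (rule ex1I[of _ "cmp C (adj C m) h"])
        show "cmp C (adj C m) h \<in> hom C W (dom C m) \<and> cmp C m (cmp C (adj C m) h) = h"
          using dm uh ex by simp
        fix u assume "u \<in> hom C W (dom C m) \<and> cmp C m u = h"
        then have "u \<in> hom C W A" "cmp C m u = h" using dm by simp_all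
        then show "u = cmp C (adj C m) h" by (rule un)
      qed
    qed
  qed
  obtain e k where ke: "kernel C e k" and eqe: "equaliser C e (idn C B) pp"
    using lemB[OF c bpa ik dn ib pph] by blast
  have "kernel C m k" using kernel_transfer[OF c eqe eqm ke] .
  then show ?thesis unfolding normal_mono_def by blast
qed

theorem proposition3p5:
  assumes "star_category C"
  shows "pre_hilbert C \<longleftrightarrow>
           has_zero_object C \<and> has_orthonormal_biproducts C \<and>
           has_isometric_equalisers C \<and> isometries_normal C"
proof -
  have c: "category C" using sD1[OF assms] .
  show ?thesis
  proof
    assume ph: "pre_hilbert C"
    have z: "has_zero_object C" and bpa: "has_orthonormal_biproducts C"
      and ik: "has_isometric_kernels C" and dn: "diagonals_normal C"
      using ph unfolding pre_hilbert_def by simp_all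
    have "has_isometric_equalisers C"
      unfolding has_isometric_equalisers_def
    proof (intro ballI)
      fix X Y f g assume "X \<in> Ob C" "Y \<in> Ob C" and f: "f \<in> hom C X Y" and g: "g \<in> hom C X Y"
      obtain e k where "kernel C e k" "isometry C e" "equaliser C e f g"
        using lemB[OF c bpa ik dn f g] by blast
      then show "\<exists>e. equaliser C e f g \<and> isometry C e" by blast
    qed
    moreover have "isometries_normal C"
      unfolding isometries_normal_def using isometry_normal[OF c assms bpa ik dn] by blast
    ultimately show "has_zero_object C \<and> has_orthonormal_biproducts C \<and>
           has_isometric_equalisers C \<and> isometries_normal C" using z bpa by simp
  next
    assume H: "has_zero_object C \<and> has_orthonormal_biproducts C \<and>
           has_isometric_equalisers C \<and> isometries_normal C"
    then have z: "has_zero_object C" and bpa: "has_orthonormal_biproducts C"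
      and ie: "has_isometric_equalisers C" and inn: "isometries_normal C" by simp_all
    have ieq: "\<exists>e. equaliser C e f g \<and> isometry C e"
      if "X \<in> Ob C" "Y \<in> Ob C" "f \<in> hom C X Y" "g \<in> hom C X Y" for X Y f g
      using ie[unfolded has_isometric_equalisers_def, rule_format, OF that] .
    have ik: "has_isometric_kernels C"
      unfolding has_isometric_kernels_def
    proof
      fix f assume fA: "f \<in> Ar C"
      define X where "X = dom C f"
      define Y where "Y = cod C f"
      have fh: "f \<in> hom C X Y" using homI[OF fA] X_def Y_def by simp
      have X: "X \<in> Ob C" and Y: "Y \<in> Ob C" using cat_ob[OF c fh] by simp_all
      obtain zz where zz: "zero_mor C X Y zz" using zero_exists[OF z X Y c] by blast
      have zh: "zz \<in> hom C X Y" using zz unfolding zero_mor_def by simp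
      obtain e where "equaliser C e f zz" "isometry C e" using ieq[OF X Y fh zh] by blast
      then show "\<exists>e. kernel C e f \<and> isometry C e"
        unfolding kernel_def using zz X_def Y_def by blast
    qed
    have dn: "diagonals_normal C"
      unfolding diagonals_normal_def
    proof (intro allI impI)
      fix X P s1 r1 s2 r2 d
      assume ob: "orthonormal_biproduct C X X P s1 r1 s2 r2" and d: "d \<in> hom C X P"
        and d1: "cmp C r1 d = idn C X" and d2: "cmp C r2 d = idn C X"
      have bp: "biproduct C X X P s1 r1 s2 r2" using ob unfolding orthonormal_biproduct_def by (rule conjunct1)
      have eqd: "equaliser C d r1 r2" using diag_equaliser[OF c bp d d1 d2] .
      have r1: "r1 \<in> hom C P X" and r2: "r2 \<in> hom C P X" using bpD(5,7)[OF bp] by simp_all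
      have P: "P \<in> Ob C" and X: "X \<in> Ob C" using cat_ob[OF c r1] by simp_all
      obtain e where eqe: "equaliser C e r1 r2" and ise: "isometry C e" using ieq[OF P X r1 r2] by blast
      have "normal_mono C e" using inn ise unfolding isometries_normal_def by blast
      then obtain k where "kernel C e k" unfolding normal_mono_def by blast
      then have "kernel C d k" using kernel_transfer[OF c eqe eqd] by simp
      then show "normal_mono C d" unfolding normal_mono_def by blast
    qed
    show "pre_hilbert C" unfolding pre_hilbert_def using assms z bpa ik dn by simp
  qed
qed

end
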